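(* Let $(\star)$ be a linear system over $\mathbb{F}_q$ with coefficient matrix $A\in\mathbb{F}_q^{m\times k}$ which is of type (RC), non-degenerate and irreducible, with $\ell$ column equivalence classes. Let $S\subseteq\mathbb{F}_q^n$ with $|S|\ge q^{1+\frac{\ell-1}{\ell}n}$, and assume that at least one of the following holds: (i) $\ell=m+1$; (ii) every column equivalence class sums to zero. Then there exists a solution $(x_1,\dots,x_k)\in S^k$ of $(\star)$ such that every $b\in\mathrm{Ann}_{\mathrm{bal}}(x_1,\dots,x_k)$ that preserves the column equivalence classes of $(\star)$ lies in the row space of $A$.
   Context: Solutions are tuples in $(\mathbb{F}_q^n)^k$ with $\sum_ja_{ij}x_j=0$ for all $i$. $\mathrm{Ann}_{\mathrm{bal}}(x_1,\dots,x_k)=\{b\in\mathbb{F}_q^k:\sum_jb_jx_j=0,\ \sum_jb_j=0\}$. Indices $j,j'$ are equivalent if columns $j,j'$ of $A$ are nonzero scalar multiples of one another; classes are column equivalence classes; a class sums to zero if its columns add up to the zero vector. A vector $b$ preserves the column equivalence classes if the matrix obtained by appending $b$ as an extra row to $A$ has the same column equivalence classes as $A$. Type (RC): every row of $A$ sums to $0$ and at most one column equivalence class has size $1$. Non-degenerate: rows of $A$ linearly independent and no zero column. Irreducible: not equivalent (same row space) to a system whose variables split into at least two classes with each equation only using (nonzero coefficients on) variables of one class. *)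

theory Defs
  imports Complex_Main "HOL-Library.Disjoint_Sets" "HOL-Library.Cardinality"
begin

text \<open>A linear system with m equations in k variables over a field is given by its
coefficient matrix A :: nat => nat => 'a, where only the entries A i j with i < m
and j < k are relevant. Vectors of F_q^k are functions nat => 'a vanishing outside
{..<k}; points of F_q^n are functions 'n => 'a for a finite index type 'n.\<close>

definition col_equiv :: "(nat \<Rightarrow> nat \<Rightarrow> 'a::field) \<Rightarrow> nat \<Rightarrow> nat \<Rightarrow> nat \<Rightarrow> bool" where
  "col_equiv A m j j' \<longleftrightarrow> (\<exists>c. c \<noteq> 0 \<and> (\<forall>i<m. A i j' = c * A i j))"

definition col_class :: "(nat \<Rightarrow> nat \<Rightarrow> 'a::field) \<Rightarrow> nat \<Rightarrow> nat \<Rightarrow> nat \<Rightarrow> nat set" where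
  "col_class A m k j = {j'. j' < k \<and> col_equiv A m j j'}"

definition col_classes :: "(nat \<Rightarrow> nat \<Rightarrow> 'a::field) \<Rightarrow> nat \<Rightarrow> nat \<Rightarrow> nat set set" where
  "col_classes A m k = {col_class A m k j | j. j < k}"

definition class_sums_zero :: "(nat \<Rightarrow> nat \<Rightarrow> 'a::field) \<Rightarrow> nat \<Rightarrow> nat set \<Rightarrow> bool" where
  "class_sums_zero A m C \<longleftrightarrow> (\<forall>i<m. (\<Sum>j\<in>C. A i j) = 0)"

definition append_row :: "(nat \<Rightarrow> nat \<Rightarrow> 'a) \<Rightarrow> nat \<Rightarrow> (nat \<Rightarrow> 'a) \<Rightarrow> nat \<Rightarrow> nat \<Rightarrow> 'a" where
  "append_row A m b = (\<lambda>i j. if i < m then A i j else b j)"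

definition preserves_classes :: "(nat \<Rightarrow> nat \<Rightarrow> 'a::field) \<Rightarrow> nat \<Rightarrow> nat \<Rightarrow> (nat \<Rightarrow> 'a) \<Rightarrow> bool" where
  "preserves_classes A m k b \<longleftrightarrow>
     col_classes (append_row A m b) (Suc m) k = col_classes A m k"

definition type_RC :: "(nat \<Rightarrow> nat \<Rightarrow> 'a::field) \<Rightarrow> nat \<Rightarrow> nat \<Rightarrow> bool" where
  "type_RC A m k \<longleftrightarrow> (\<forall>i<m. (\<Sum>j<k. A i j) = 0)
      \<and> card {C \<in> col_classes A m k. card C = 1} \<le> 1"

definition non_degenerate :: "(nat \<Rightarrow> nat \<Rightarrow> 'a::field) \<Rightarrow> nat \<Rightarrow> nat \<Rightarrow> bool" where
  "non_degenerate A m k \<longleftrightarrow>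
     (\<forall>c. (\<forall>j<k. (\<Sum>i<m. c i * A i j) = 0) \<longrightarrow> (\<forall>i<m. c i = 0))
     \<and> (\<forall>j<k. \<exists>i<m. A i j \<noteq> 0)"

definition row_space :: "(nat \<Rightarrow> nat \<Rightarrow> 'a::field) \<Rightarrow> nat \<Rightarrow> nat \<Rightarrow> (nat \<Rightarrow> 'a) set" where
  "row_space A m k = {b. (\<forall>j\<ge>k. b j = 0) \<and> (\<exists>c. \<forall>j<k. b j = (\<Sum>i<m. c i * A i j))}"

definition irreducible_sys :: "(nat \<Rightarrow> nat \<Rightarrow> 'a::field) \<Rightarrow> nat \<Rightarrow> nat \<Rightarrow> bool" where
  "irreducible_sys A m k \<longleftrightarrow>
     \<not> (\<exists>(A' :: nat \<Rightarrow> nat \<Rightarrow> 'a) m' P. row_space A' m' k = row_space A m k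
          \<and> partition_on {..<k} P \<and> card P \<ge> 2
          \<and> (\<forall>i<m'. \<exists>B\<in>P. \<forall>j<k. A' i j \<noteq> 0 \<longrightarrow> j \<in> B))"

definition is_solution :: "(nat \<Rightarrow> nat \<Rightarrow> 'a::field) \<Rightarrow> nat \<Rightarrow> nat \<Rightarrow> (nat \<Rightarrow> 'n \<Rightarrow> 'a) \<Rightarrow> bool" where
  "is_solution A m k x \<longleftrightarrow> (\<forall>i<m. (\<lambda>t. \<Sum>j<k. A i j * x j t) = (\<lambda>t. 0))"

definition Ann_bal :: "nat \<Rightarrow> (nat \<Rightarrow> 'n \<Rightarrow> 'a::field) \<Rightarrow> (nat \<Rightarrow> 'a) set" where
  "Ann_bal k x = {b. (\<forall>j\<ge>k. b j = 0) \<and> (\<lambda>t. \<Sum>j<k. b j * x j t) = (\<lambda>t. 0)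
                      \<and> (\<Sum>j<k. b j) = 0}"

end

theory Submission
  imports Defs
begin


definition kerset :: "nat \<Rightarrow> (nat \<Rightarrow> 'b \<Rightarrow> 'a::field) \<Rightarrow> 'b set \<Rightarrow> ('b \<Rightarrow> 'a) set" where
  "kerset p \<rho> L = {u \<in> PiE L (\<lambda>_. UNIV). \<forall>i<p. (\<Sum>r\<in>L. \<rho> i r * u r) = 0}"

definition indep :: "nat \<Rightarrow> (nat \<Rightarrow> 'b \<Rightarrow> 'a::field) \<Rightarrow> 'b set \<Rightarrow> bool" where
  "indep p \<rho> L \<longleftrightarrow> (\<forall>c. (\<forall>r\<in>L. (\<Sum>i<p. c i * \<rho> i r) = 0) \<longrightarrow> (\<forall>i<p. c i = 0))"

lemma key_count:
  fixes \<rho> :: "nat \<Rightarrow> 'b \<Rightarrow> 'a::{field,finite}"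
  assumes "finite L" "indep p \<rho> L"
  shows "card (kerset p \<rho> L) * CARD('a) ^ p \<le> CARD('a) ^ card L"
  using assms
proof (induction p arbitrary: \<rho> L)
  case 0
  have "kerset 0 \<rho> L = PiE L (\<lambda>_. UNIV)" by (simp add: kerset_def)
  then show ?case using 0 by (simp add: card_PiE)
next
  case (Suc p)
  have "\<exists>r0\<in>L. \<rho> p r0 \<noteq> 0"
  proof (rule ccontr)
    assume h: "\<not> ?thesis"
    have z: "(\<Sum>i<p. (if i = p then 1 else 0) * \<rho> i r) = 0" for r
      by (rule sum.neutral) auto
    have "\<forall>r\<in>L. (\<Sum>i<Suc p. (if i = p then 1 else 0) * \<rho> i r) = 0"
      using h z by simp
    moreover have "(\<forall>r\<in>L. (\<Sum>i<Suc p. (\<lambda>i. if i = p then (1::'a) else 0) i * \<rho> i r) = 0) \<longrightarrow> (\<forall>i<Suc p. (\<lambda>i. if i = p then (1::'a) else 0) i = 0)"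
      using Suc.prems(2) unfolding indep_def by (rule spec)
    ultimately have "\<forall>i<Suc p. (if i = p then (1::'a) else 0) = 0" by simp
    then have "(if p = p then (1::'a) else 0) = 0" using lessI by blast
    then show False by simp
  qed
  then obtain r0 where r0: "r0 \<in> L" "\<rho> p r0 \<noteq> 0" by blast
  define L' where "L' = L - {r0}"
  define \<rho>' where "\<rho>' = (\<lambda>i r. \<rho> i r - \<rho> i r0 * \<rho> p r / \<rho> p r0)"
  have fin': "finite L'" using Suc.prems by (simp add: L'_def)
  have ind': "indep p \<rho>' L'"
    unfolding indep_def
  proof (rule allI, rule impI)
    fix c :: "nat \<Rightarrow> 'a"
    assume hc: "\<forall>r\<in>L'. (\<Sum>i<p. c i * \<rho>' i r) = 0"
    define c' where "c' = (\<lambda>i. if i = p then - (\<Sum>i<p. c i * \<rho> i r0) / \<rho> p r0 else c i)"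
    have "\<forall>r\<in>L. (\<Sum>i<Suc p. c' i * \<rho> i r) = 0"
    proof
      fix r assume r: "r \<in> L"
      have e: "(\<Sum>i<Suc p. c' i * \<rho> i r) = (\<Sum>i<p. c i * \<rho> i r) - (\<Sum>i<p. c i * \<rho> i r0) * \<rho> p r / \<rho> p r0"
        by (simp add: c'_def)
      show "(\<Sum>i<Suc p. c' i * \<rho> i r) = 0"
      proof (cases "r = r0")
        case True
        then show ?thesis using e r0 by simp
      next
        case False
        then have "r \<in> L'" using r by (simp add: L'_def)
        then have "(\<Sum>i<p. c i * \<rho>' i r) = 0" using hc by blast
        moreover have "(\<Sum>i<p. c i * \<rho>' i r) = (\<Sum>i<p. c i * \<rho> i r) - (\<Sum>i<p. c i * \<rho> i r0) * \<rho> p r / \<rho> p r0"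
        proof -
          have "(\<Sum>i<p. c i * \<rho>' i r) = (\<Sum>i<p. c i * \<rho> i r - c i * \<rho> i r0 * (\<rho> p r / \<rho> p r0))"
            by (rule sum.cong) (simp_all add: \<rho>'_def right_diff_distrib mult.assoc)
          also have "\<dots> = (\<Sum>i<p. c i * \<rho> i r) - (\<Sum>i<p. c i * \<rho> i r0) * (\<rho> p r / \<rho> p r0)"
            by (simp add: sum_subtractf sum_distrib_right sum_divide_distrib)
          finally show ?thesis by simp
        qed
        ultimately show ?thesis using e by simp
      qed
    qed
    then have "\<forall>i<Suc p. c' i = 0" using Suc.prems(2) unfolding indep_def by blast
    then have a: "\<forall>i<Suc p. c' i = 0" .
    show "\<forall>i<p. c i = 0"
    proof (intro allI impI)
      fix i assume i: "i < p"
      then have "c' i = 0" using a by simp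
      then show "c i = 0" using i by (simp add: c'_def)
    qed
  qed
  have IH: "card (kerset p \<rho>' L') * CARD('a) ^ p \<le> CARD('a) ^ card L'"
    using Suc.IH fin' ind' by blast
  have inj: "inj_on (\<lambda>u. restrict u L') (kerset (Suc p) \<rho> L)"
  proof (rule inj_onI)
    fix u v assume u: "u \<in> kerset (Suc p) \<rho> L" and v: "v \<in> kerset (Suc p) \<rho> L"
      and eq: "restrict u L' = restrict v L'"
    have uv: "\<forall>r\<in>L'. u r = v r" using eq by (metis restrict_apply')
    have su: "(\<Sum>r\<in>L. \<rho> p r * u r) = 0" and sv: "(\<Sum>r\<in>L. \<rho> p r * v r) = 0"
      using u v by (auto simp: kerset_def)
    have "(\<Sum>r\<in>L. \<rho> p r * u r) = \<rho> p r0 * u r0 + (\<Sum>r\<in>L'. \<rho> p r * u r)"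
      using r0 Suc.prems(1) by (simp add: L'_def sum.remove)
    moreover have "(\<Sum>r\<in>L. \<rho> p r * v r) = \<rho> p r0 * v r0 + (\<Sum>r\<in>L'. \<rho> p r * v r)"
      using r0 Suc.prems(1) by (simp add: L'_def sum.remove)
    moreover have "(\<Sum>r\<in>L'. \<rho> p r * u r) = (\<Sum>r\<in>L'. \<rho> p r * v r)"
      using uv by simp
    ultimately have "\<rho> p r0 * u r0 = \<rho> p r0 * v r0" using su sv by (metis add_right_cancel)
    then have "u r0 = v r0" using r0 by simp
    then have "\<forall>r\<in>L. u r = v r" using uv by (auto simp: L'_def)
    moreover have "u \<in> PiE L (\<lambda>_. UNIV)" "v \<in> PiE L (\<lambda>_. UNIV)" using u v by (auto simp: kerset_def)
    ultimately show "u = v" using PiE_ext by blast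
  qed
  have sub: "(\<lambda>u. restrict u L') ` kerset (Suc p) \<rho> L \<subseteq> kerset p \<rho>' L'"
  proof
    fix w assume "w \<in> (\<lambda>u. restrict u L') ` kerset (Suc p) \<rho> L"
    then obtain u where u: "u \<in> kerset (Suc p) \<rho> L" and w: "w = restrict u L'" by blast
    have "\<forall>i<p. (\<Sum>r\<in>L'. \<rho>' i r * u r) = 0"
    proof (intro allI impI)
      fix i assume i: "i < p"
      have s1: "(\<Sum>r\<in>L. \<rho> i r * u r) = 0" and s2: "(\<Sum>r\<in>L. \<rho> p r * u r) = 0"
        using u i by (auto simp: kerset_def)
      have d1: "(\<Sum>r\<in>L. \<rho> i r * u r) = \<rho> i r0 * u r0 + (\<Sum>r\<in>L'. \<rho> i r * u r)"
        using r0 Suc.prems(1) by (simp add: L'_def sum.remove)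
      have d2: "(\<Sum>r\<in>L. \<rho> p r * u r) = \<rho> p r0 * u r0 + (\<Sum>r\<in>L'. \<rho> p r * u r)"
        using r0 Suc.prems(1) by (simp add: L'_def sum.remove)
      have d3: "- (\<rho> p r0 * u r0) = (\<Sum>r\<in>L'. \<rho> p r * u r)"
        using d2 s2 by (metis neg_eq_iff_add_eq_0)
      have "(\<Sum>r\<in>L'. \<rho>' i r * u r) = (\<Sum>r\<in>L'. \<rho> i r * u r) - \<rho> i r0 / \<rho> p r0 * (\<Sum>r\<in>L'. \<rho> p r * u r)"
      proof -
        have "(\<Sum>r\<in>L'. \<rho>' i r * u r) = (\<Sum>r\<in>L'. \<rho> i r * u r - \<rho> i r0 / \<rho> p r0 * (\<rho> p r * u r))"
          by (rule sum.cong) (simp_all add: \<rho>'_def left_diff_distrib)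
        also have "\<dots> = (\<Sum>r\<in>L'. \<rho> i r * u r) - \<rho> i r0 / \<rho> p r0 * (\<Sum>r\<in>L'. \<rho> p r * u r)"
          by (simp add: sum_subtractf sum_distrib_left)
        finally show ?thesis .
      qed
      also have "\<dots> = (\<Sum>r\<in>L'. \<rho> i r * u r) + \<rho> i r0 / \<rho> p r0 * (\<rho> p r0 * u r0)"
        using r0(2) by (simp flip: d3)
      also have "\<dots> = (\<Sum>r\<in>L. \<rho> i r * u r)" using d1 r0 by simp
      finally show "(\<Sum>r\<in>L'. \<rho>' i r * u r) = 0" using s1 by simp
    qed
    then show "w \<in> kerset p \<rho>' L'" using w by (simp add: kerset_def)
  qed
  have "finite (PiE L' (\<lambda>_. UNIV :: 'a set))" using fin' by (simp add: finite_PiE)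
  then have fk: "finite (kerset p \<rho>' L')" unfolding kerset_def
    by (rule rev_finite_subset) auto
  have "card (kerset (Suc p) \<rho> L) \<le> card (kerset p \<rho>' L')"
    using card_inj_on_le[OF inj sub fk] .
  then have "card (kerset (Suc p) \<rho> L) * CARD('a) ^ Suc p \<le> card (kerset p \<rho>' L') * CARD('a) ^ p * CARD('a)"
    by (simp add: mult.assoc mult.commute)
  also have "\<dots> \<le> CARD('a) ^ card L' * CARD('a)" using IH by simp
  also have "\<dots> = CARD('a) ^ card L"
  proof -
    have "card L = Suc (card L')" unfolding L'_def using card_Suc_Diff1[OF Suc.prems(1) r0(1)] by simp
    then show ?thesis by simp
  qed
  finally show ?case .
qed



lemma cs_real:
  fixes f :: "'b \<Rightarrow> real"
  assumes "finite Y"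
  shows "(\<Sum>y\<in>Y. f y)^2 \<le> real (card Y) * (\<Sum>y\<in>Y. (f y)^2)"
proof -
  have "0 \<le> (\<Sum>y\<in>Y. \<Sum>y'\<in>Y. (f y - f y')^2)" by (intro sum_nonneg) simp
  also have "\<dots> = (\<Sum>y\<in>Y. \<Sum>y'\<in>Y. (f y)^2 + (f y')^2 - 2 * (f y * f y'))"
    by (simp add: power2_eq_square algebra_simps)
  also have "\<dots> = (\<Sum>y\<in>Y. real (card Y) * (f y)^2 + (\<Sum>y'\<in>Y. (f y')^2) - 2 * (\<Sum>y'\<in>Y. f y') * f y)"
    by (rule sum.cong) (simp_all add: sum.distrib sum_subtractf sum_distrib_left sum_distrib_right mult.commute mult.left_commute)
  also have "\<dots> = real (card Y) * (\<Sum>y\<in>Y. (f y)^2) + real (card Y) * (\<Sum>y'\<in>Y. (f y')^2) - 2 * (\<Sum>y'\<in>Y. f y') * (\<Sum>y\<in>Y. f y)"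
    by (simp add: sum.distrib sum_subtractf sum_distrib_left)
  also have "\<dots> = 2 * real (card Y) * (\<Sum>y\<in>Y. (f y)^2) - 2 * (\<Sum>y\<in>Y. f y)^2"
    by (simp add: power2_eq_square)
  finally show ?thesis by simp
qed

lemma cs_nat:
  assumes "finite T" "finite Y" "F ` T \<subseteq> Y"
  shows "card T ^ 2 \<le> card Y * card {p \<in> T \<times> T. F (fst p) = F (snd p)}"
proof -
  define f where "f y = card {s \<in> T. F s = y}" for y
  have cT: "card T = (\<Sum>y\<in>Y. f y)"
    unfolding f_def using sum.group[OF assms(1) assms(2) assms(3), of "\<lambda>_. 1::nat"] by simp
  define G where "G = {p \<in> T \<times> T. F (fst p) = F (snd p)}"
  have fG: "finite G" using assms(1) by (simp add: G_def)
  have "card G = (\<Sum>y\<in>Y. card {p \<in> G. F (fst p) = y})"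
    using sum.group[OF fG assms(2), of "\<lambda>p. F (fst p)" "\<lambda>_. 1::nat"] assms(3) by (force simp: G_def)
  also have "\<dots> = (\<Sum>y\<in>Y. (f y)^2)"
  proof (rule sum.cong[OF refl])
    fix y
    have "{p \<in> G. F (fst p) = y} = {s \<in> T. F s = y} \<times> {s \<in> T. F s = y}"
      by (auto simp: G_def)
    then show "card {p \<in> G. F (fst p) = y} = (f y)^2"
      by (simp add: f_def card_cartesian_product power2_eq_square)
  qed
  finally have cG: "card G = (\<Sum>y\<in>Y. (f y)^2)" .
  have "real ((\<Sum>y\<in>Y. f y)^2) \<le> real (card Y) * real (\<Sum>y\<in>Y. (f y)^2)"
    using cs_real[OF assms(2), of "\<lambda>y. real (f y)"] by simp
  then have "(\<Sum>y\<in>Y. f y)^2 \<le> card Y * (\<Sum>y\<in>Y. (f y)^2)"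
    by (metis of_nat_le_iff of_nat_mult)
  then show ?thesis using cT cG by (simp add: G_def)
qed

lemma ce_refl: "col_equiv A m j j"
  unfolding col_equiv_def by (rule exI[of _ 1]) simp

lemma ce_sym: "col_equiv A m j j' \<Longrightarrow> col_equiv A m j' j"
  unfolding col_equiv_def
proof -
  assume "\<exists>c. c \<noteq> 0 \<and> (\<forall>i<m. A i j' = c * A i j)"
  then obtain c where c: "c \<noteq> 0" "\<forall>i<m. A i j' = c * A i j" by blast
  then have "\<forall>i<m. A i j = inverse c * A i j'" by simp
  then show "\<exists>c. c \<noteq> 0 \<and> (\<forall>i<m. A i j = c * A i j')" using c(1) by (intro exI[of _ "inverse c"]) simp
qed

lemma ce_trans: "col_equiv A m j j' \<Longrightarrow> col_equiv A m j' j'' \<Longrightarrow> col_equiv A m j j''"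
  unfolding col_equiv_def
proof -
  assume "\<exists>c. c \<noteq> 0 \<and> (\<forall>i<m. A i j' = c * A i j)" "\<exists>c. c \<noteq> 0 \<and> (\<forall>i<m. A i j'' = c * A i j')"
  then obtain c d where "c \<noteq> 0" "\<forall>i<m. A i j' = c * A i j" "d \<noteq> 0" "\<forall>i<m. A i j'' = d * A i j'" by blast
  then show "\<exists>c. c \<noteq> 0 \<and> (\<forall>i<m. A i j'' = c * A i j)" by (intro exI[of _ "d * c"]) simp
qed

lemma mem_cc: "j < k \<Longrightarrow> j \<in> col_class A m k j"
  by (simp add: col_class_def ce_refl)

lemma cc_eq: "j \<in> col_class A m k j0 \<Longrightarrow> col_class A m k j = col_class A m k j0"
proof -
  assume "j \<in> col_class A m k j0"
  then have h: "col_equiv A m j0 j" by (simp add: col_class_def)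
  have "\<And>j'. col_equiv A m j j' \<Longrightarrow> col_equiv A m j0 j'" using ce_trans[OF h] .
  moreover have "\<And>j'. col_equiv A m j0 j' \<Longrightarrow> col_equiv A m j j'" using ce_trans[OF ce_sym[OF h]] .
  ultimately show ?thesis unfolding col_class_def by blast
qed

lemma cls_in: "C \<in> col_classes A m k \<Longrightarrow> j \<in> C \<Longrightarrow> C = col_class A m k j"
proof -
  assume C: "C \<in> col_classes A m k" and j: "j \<in> C"
  then obtain j0 where "C = col_class A m k j0" unfolding col_classes_def by blast
  then show ?thesis using cc_eq[of j A m k j0] j by simp
qed

lemma cc_in: "j < k \<Longrightarrow> col_class A m k j \<in> col_classes A m k"
  unfolding col_classes_def by blast

lemma CL_finite: "finite (col_classes A m k)"
proof -
  have "col_classes A m k = (col_class A m k) ` {..<k}" unfolding col_classes_def by auto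
  then show ?thesis by simp
qed

lemma C_sub: "C \<in> col_classes A m k \<Longrightarrow> C \<subseteq> {..<k}"
  unfolding col_classes_def col_class_def by auto

lemma C_fin: "C \<in> col_classes A m k \<Longrightarrow> finite C"
proof -
  assume "C \<in> col_classes A m k"
  then have "C \<subseteq> {..<k}" by (rule C_sub)
  then show "finite C" by (rule finite_subset) simp
qed

lemma C_ne: "C \<in> col_classes A m k \<Longrightarrow> C \<noteq> {}"
proof -
  assume "C \<in> col_classes A m k"
  then obtain j0 where "j0 < k" "C = col_class A m k j0" unfolding col_classes_def by blast
  then have "j0 \<in> C" using mem_cc[of j0 k A m] by simp
  then show "C \<noteq> {}" by blast
qed

definition rep :: "nat set \<Rightarrow> nat" where "rep C = (SOME j. j \<in> C)"

lemma rep_in: "C \<in> col_classes A m k \<Longrightarrow> rep C \<in> C"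
  unfolding rep_def using C_ne by (metis some_in_eq)

lemma rep_lt: "C \<in> col_classes A m k \<Longrightarrow> rep C < k"
  using rep_in C_sub by blast

lemma sum_classes:
  "(\<Sum>j<k. f j) = (\<Sum>C\<in>col_classes A m k. \<Sum>j\<in>C. f j)"
proof -
  have U: "\<Union>(col_classes A m k) = {..<k}"
    using C_sub mem_cc cc_in by blast
  have D: "\<forall>C\<in>col_classes A m k. \<forall>B\<in>col_classes A m k. C \<noteq> B \<longrightarrow> C \<inter> B = {}"
    using cls_in by blast
  have "(\<Sum>j\<in>\<Union>(col_classes A m k). f j) = (\<Sum>C\<in>col_classes A m k. \<Sum>j\<in>C. f j)"
  proof -
    have F: "\<forall>C\<in>col_classes A m k. finite C" using C_fin by blast
    show ?thesis using sum.Union_disjoint[OF F D, of f] by (simp add: o_def)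
  qed
  then show ?thesis using U by simp
qed

lemma prop_A:
  assumes "C \<in> col_classes A m k" "j \<in> C"
  shows "\<exists>c. c \<noteq> 0 \<and> (\<forall>i<m. A i j = c * A i (rep C))"
proof -
  have "C = col_class A m k (rep C)" using cls_in[OF assms(1) rep_in[OF assms(1)]] .
  then have "j \<in> {j'. j' < k \<and> col_equiv A m (rep C) j'}" using assms(2) by (simp add: col_class_def)
  then have "col_equiv A m (rep C) j" by blast
  then show ?thesis by (simp add: col_equiv_def)
qed

lemma prop_b:
  assumes "preserves_classes A m k b" "C \<in> col_classes A m k" "j \<in> C"
  shows "\<exists>c. c \<noteq> 0 \<and> (\<forall>i<m. A i j = c * A i (rep C)) \<and> b j = c * b (rep C)"
proof -
  define A' where "A' = append_row A m b"
  have r: "rep C \<in> C" "rep C < k" using rep_in[OF assms(2)] rep_lt[OF assms(2)] by auto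
  have "col_class A' (Suc m) k (rep C) \<in> col_classes A' (Suc m) k" using cc_in[OF r(2)] .
  then have "col_class A' (Suc m) k (rep C) \<in> col_classes A m k"
    using assms(1) by (simp add: preserves_classes_def A'_def)
  moreover have "rep C \<in> col_class A' (Suc m) k (rep C)" using mem_cc[OF r(2)] .
  ultimately have "col_class A' (Suc m) k (rep C) = col_class A m k (rep C)" using cls_in by blast
  also have "\<dots> = C" using cls_in[OF assms(2) r(1)] by simp
  finally have "j \<in> col_class A' (Suc m) k (rep C)" using assms(3) by simp
  then have "col_equiv A' (Suc m) (rep C) j" by (simp add: col_class_def)
  then obtain c where c: "c \<noteq> 0" "\<forall>i<Suc m. A' i j = c * A' i (rep C)" by (auto simp: col_equiv_def)
  have "\<forall>i<m. A i j = c * A i (rep C)"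
  proof (intro allI impI)
    fix i assume "i < m"
    then show "A i j = c * A i (rep C)" using c(2)[rule_format, of i] by (simp add: A'_def append_row_def)
  qed
  moreover have "b j = c * b (rep C)" using c(2)[rule_format, of m] by (simp add: A'_def append_row_def)
  ultimately show ?thesis using c(1) by blast
qed



lemma RSind:
  assumes nd: "non_degenerate A m k"
    and h: "\<forall>C\<in>col_classes A m k. (\<Sum>i<m. c i * A i (rep C)) = 0"
  shows "\<forall>i<m. c i = 0"
proof -
  have "\<forall>j<k. (\<Sum>i<m. c i * A i j) = 0"
  proof (intro allI impI)
    fix j assume j: "j < k"
    define C where "C = col_class A m k j"
    have C: "C \<in> col_classes A m k" "j \<in> C" using cc_in[OF j] mem_cc[OF j] by (auto simp: C_def)
    obtain g where g: "\<forall>i<m. A i j = g * A i (rep C)" using prop_A[OF C] by blast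
    have "(\<Sum>i<m. c i * A i j) = (\<Sum>i<m. g * (c i * A i (rep C)))"
      by (rule sum.cong) (simp_all add: g)
    also have "\<dots> = g * (\<Sum>i<m. c i * A i (rep C))" by (simp add: sum_distrib_left)
    also have "\<dots> = 0" using h C(1) by simp
    finally show "(\<Sum>i<m. c i * A i j) = 0" .
  qed
  then show ?thesis using nd unfolding non_degenerate_def by blast
qed

lemma inRS:
  assumes bk: "\<forall>j\<ge>k. b j = 0"
    and pr: "\<forall>C\<in>col_classes A m k. \<forall>j\<in>C. \<exists>g. (\<forall>i<m. A i j = g * A i (rep C)) \<and> b j = g * b (rep C)"
    and c: "\<forall>C\<in>col_classes A m k. b (rep C) = (\<Sum>i<m. c i * A i (rep C))"
  shows "b \<in> row_space A m k"
proof -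
  have "\<forall>j<k. b j = (\<Sum>i<m. c i * A i j)"
  proof (intro allI impI)
    fix j assume j: "j < k"
    define C where "C = col_class A m k j"
    have C: "C \<in> col_classes A m k" "j \<in> C" using cc_in[OF j] mem_cc[OF j] by (auto simp: C_def)
    obtain g where g: "\<forall>i<m. A i j = g * A i (rep C)" "b j = g * b (rep C)" using pr C by blast
    have "b j = g * (\<Sum>i<m. c i * A i (rep C))" using g(2) c C(1) by simp
    also have "\<dots> = (\<Sum>i<m. c i * (g * A i (rep C)))" by (simp add: sum_distrib_left mult.left_commute)
    also have "\<dots> = (\<Sum>i<m. c i * A i j)" by (rule sum.cong) (simp_all add: g)
    finally show "b j = (\<Sum>i<m. c i * A i j)" .
  qed
  then show ?thesis using bk unfolding row_space_def by blast
qed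

definition RSr :: "(nat \<Rightarrow> nat \<Rightarrow> 'a::field) \<Rightarrow> nat \<Rightarrow> nat \<Rightarrow> (nat set \<Rightarrow> 'a) set" where
  "RSr A m k = (\<lambda>c. restrict (\<lambda>C. \<Sum>i<m. c i * A i (rep C)) (col_classes A m k)) ` ({..<m} \<rightarrow>\<^sub>E UNIV)"

lemma RSr_mem: "\<beta> \<in> RSr A m k \<Longrightarrow> \<exists>c. \<forall>C\<in>col_classes A m k. \<beta> C = (\<Sum>i<m. c i * A i (rep C))"
proof -
  assume "\<beta> \<in> RSr A m k"
  then obtain c where "\<beta> = restrict (\<lambda>C. \<Sum>i<m. c i * A i (rep C)) (col_classes A m k)"
    unfolding RSr_def by (elim imageE) blast
  then have "\<forall>C\<in>col_classes A m k. \<beta> C = (\<Sum>i<m. c i * A i (rep C))" by simp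
  then show ?thesis by blast
qed

lemma RSr_sub: "RSr A m k \<subseteq> col_classes A m k \<rightarrow>\<^sub>E UNIV"
  unfolding RSr_def by (rule image_subsetI) simp

lemma RSr_intro:
  assumes "\<beta> \<in> col_classes A m k \<rightarrow>\<^sub>E UNIV" "\<forall>C\<in>col_classes A m k. \<beta> C = (\<Sum>i<m. c i * A i (rep C))"
  shows "\<beta> \<in> RSr A m k"
proof -
  have "\<beta> = restrict (\<lambda>C. \<Sum>i<m. restrict c {..<m} i * A i (rep C)) (col_classes A m k)"
  proof (rule PiE_ext[OF assms(1)])
    show "restrict (\<lambda>C. \<Sum>i<m. restrict c {..<m} i * A i (rep C)) (col_classes A m k) \<in> col_classes A m k \<rightarrow>\<^sub>E UNIV"
      by simp
    fix C assume "C \<in> col_classes A m k"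
    then show "\<beta> C = restrict (\<lambda>C. \<Sum>i<m. restrict c {..<m} i * A i (rep C)) (col_classes A m k) C"
      using assms(2) by simp
  qed
  moreover have "restrict c {..<m} \<in> {..<m} \<rightarrow>\<^sub>E UNIV" by simp
  ultimately show ?thesis unfolding RSr_def by blast
qed

lemma RSr_card:
  fixes A :: "nat \<Rightarrow> nat \<Rightarrow> 'a::{field,finite}"
  assumes nd: "non_degenerate A m k"
  shows "card (RSr A m k) = CARD('a) ^ m"
proof -
  have "inj_on (\<lambda>c. restrict (\<lambda>C. \<Sum>i<m. c i * A i (rep C)) (col_classes A m k)) ({..<m} \<rightarrow>\<^sub>E UNIV)"
  proof (rule inj_onI)
    fix c c' :: "nat \<Rightarrow> 'a"
    assume c: "c \<in> {..<m} \<rightarrow>\<^sub>E UNIV" and c': "c' \<in> {..<m} \<rightarrow>\<^sub>E UNIV"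
      and eq: "restrict (\<lambda>C. \<Sum>i<m. c i * A i (rep C)) (col_classes A m k) = restrict (\<lambda>C. \<Sum>i<m. c' i * A i (rep C)) (col_classes A m k)"
    have "\<forall>C\<in>col_classes A m k. (\<Sum>i<m. (c i - c' i) * A i (rep C)) = 0"
    proof
      fix C assume C: "C \<in> col_classes A m k"
      have "(\<Sum>i<m. c i * A i (rep C)) = (\<Sum>i<m. c' i * A i (rep C))"
        using fun_cong[OF eq, of C] C by simp
      then show "(\<Sum>i<m. (c i - c' i) * A i (rep C)) = 0"
        by (simp add: left_diff_distrib sum_subtractf)
    qed
    then have "\<forall>i<m. c i - c' i = 0" using RSind[OF nd, where c="\<lambda>i. c i - c' i"] by blast
    then show "c = c'" using c c' by (intro PiE_ext) auto
  qed
  then have "card (RSr A m k) = card ({..<m} \<rightarrow>\<^sub>E (UNIV :: 'a set))"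
    unfolding RSr_def by (rule card_image)
  then show ?thesis by (simp add: card_PiE)
qed

lemma sum_b_zero:
  assumes nd: "non_degenerate A m k" and pres: "preserves_classes A m k b"
    and C: "C \<in> col_classes A m k" and cz: "class_sums_zero A m C"
  shows "(\<Sum>j\<in>C. b j) = 0"
proof -
  obtain i0 where i0: "i0 < m" "A i0 (rep C) \<noteq> 0"
    using nd rep_lt[OF C] unfolding non_degenerate_def by blast
  have "\<forall>j\<in>C. b j = A i0 j * (b (rep C) / A i0 (rep C))"
  proof
    fix j assume j: "j \<in> C"
    obtain g where g: "\<forall>i<m. A i j = g * A i (rep C)" "b j = g * b (rep C)"
      using prop_b[OF pres C j] by blast
    show "b j = A i0 j * (b (rep C) / A i0 (rep C))" using g i0 by simp
  qed
  then have "(\<Sum>j\<in>C. b j) = (\<Sum>j\<in>C. A i0 j) * (b (rep C) / A i0 (rep C))"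
    by (simp add: sum_distrib_right sum_divide_distrib)
  also have "\<dots> = 0" using cz i0(1) unfolding class_sums_zero_def by simp
  finally show ?thesis .
qed

definition xx :: "(nat \<Rightarrow> nat \<Rightarrow> 'a::field) \<Rightarrow> nat \<Rightarrow> nat \<Rightarrow> (nat set \<Rightarrow> 'n \<Rightarrow> 'a) \<Rightarrow> (nat set \<Rightarrow> 'n \<Rightarrow> 'a) \<Rightarrow> nat \<Rightarrow> 'n \<Rightarrow> 'a" where
  "xx A m k s s' j = (if j = rep (col_class A m k j) then s (col_class A m k j) else s' (col_class A m k j))"

lemma xsum:
  assumes C: "C \<in> col_classes A m k"
  shows "(\<Sum>j\<in>C. w j * xx A m k s s' j t) = (\<Sum>j\<in>C. w j) * s' C t + w (rep C) * (s C t - s' C t)"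
proof -
  have "(\<Sum>j\<in>C. w j * xx A m k s s' j t) = (\<Sum>j\<in>C. w j * s' C t + (if j = rep C then w j * (s C t - s' C t) else 0))"
  proof (rule sum.cong[OF refl])
    fix j assume j: "j \<in> C"
    have cj: "col_class A m k j = C" using cls_in[OF C j] by simp
    show "w j * xx A m k s s' j t = w j * s' C t + (if j = rep C then w j * (s C t - s' C t) else 0)"
      unfolding xx_def cj by (cases "j = rep C") (simp_all add: right_diff_distrib)
  qed
  also have "\<dots> = (\<Sum>j\<in>C. w j) * s' C t + w (rep C) * (s C t - s' C t)"
    using C_fin[OF C] rep_in[OF C] by (simp add: sum.distrib sum_distrib_right)
  finally show ?thesis .
qed



lemma caseB:
  fixes A :: "nat \<Rightarrow> nat \<Rightarrow> 'a::{field,finite}"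
    and S :: "('n::finite \<Rightarrow> 'a) set"
  assumes rc: "type_RC A m k" and nd: "non_degenerate A m k"
    and l: "card (col_classes A m k) = m + 1"
    and C0: "C0 \<in> col_classes A m k" and ncz: "\<not> class_sums_zero A m C0"
    and Sne: "S \<noteq> {}"
  shows "\<exists>x :: nat \<Rightarrow> 'n \<Rightarrow> 'a. (\<forall>j<k. x j \<in> S) \<and> is_solution A m k x
           \<and> (\<forall>b\<in>Ann_bal k x. preserves_classes A m k b \<longrightarrow> b \<in> row_space A m k)"
proof -
  define CL where "CL = col_classes A m k"
  obtain s0 where s0: "s0 \<in> S" using Sne by blast
  define x :: "nat \<Rightarrow> 'n \<Rightarrow> 'a" where "x = (\<lambda>j. s0)"
  have xS: "\<forall>j<k. x j \<in> S" using s0 by (simp add: x_def)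
  have sol: "is_solution A m k x"
    unfolding is_solution_def
  proof (intro allI impI)
    fix i assume i: "i < m"
    have "(\<Sum>j<k. A i j) = 0" using rc i unfolding type_RC_def by blast
    then show "(\<lambda>t. \<Sum>j<k. A i j * x j t) = (\<lambda>t. 0)"
      by (simp add: x_def flip: sum_distrib_right)
  qed
  have ann: "\<forall>b\<in>Ann_bal k x. preserves_classes A m k b \<longrightarrow> b \<in> row_space A m k"
  proof (intro ballI impI)
    fix b assume b: "b \<in> Ann_bal k x" and pres: "preserves_classes A m k b"
    have bk: "\<forall>j\<ge>k. b j = 0" and bal: "(\<Sum>j<k. b j) = 0" using b by (auto simp: Ann_bal_def)
    define g where "g j = (SOME g. (\<forall>i<m. A i j = g * A i (rep (col_class A m k j))) \<and> b j = g * b (rep (col_class A m k j)))" for j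
    have gp: "\<forall>i<m. A i j = g j * A i (rep C)" "b j = g j * b (rep C)" if C: "C \<in> CL" "j \<in> C" for C j
    proof -
      have cj: "col_class A m k j = C" using cls_in[of C A m k j] C by (simp add: CL_def)
      have "\<exists>g. (\<forall>i<m. A i j = g * A i (rep C)) \<and> b j = g * b (rep C)"
        using prop_b[OF pres, of C j] C by (auto simp: CL_def)
      then have "(\<forall>i<m. A i j = g j * A i (rep C)) \<and> b j = g j * b (rep C)"
        unfolding g_def cj by (rule someI_ex)
      then show "\<forall>i<m. A i j = g j * A i (rep C)" "b j = g j * b (rep C)" by auto
    qed
    define \<tau> where "\<tau> C = (\<Sum>j\<in>C. g j)" for C
    have H1: "(\<Sum>C\<in>CL. \<tau> C * b (rep C)) = 0"
    proof -
      have "(\<Sum>C\<in>CL. \<tau> C * b (rep C)) = (\<Sum>C\<in>CL. \<Sum>j\<in>C. b j)"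
      proof (rule sum.cong[OF refl])
        fix C assume C: "C \<in> CL"
        have "(\<Sum>j\<in>C. b j) = (\<Sum>j\<in>C. g j * b (rep C))" by (rule sum.cong) (simp_all add: gp(2)[OF C])
        then show "\<tau> C * b (rep C) = (\<Sum>j\<in>C. b j)" by (simp add: \<tau>_def sum_distrib_right)
      qed
      also have "\<dots> = (\<Sum>j<k. b j)" using sum_classes[of b k A m] by (simp add: CL_def)
      finally show ?thesis using bal by simp
    qed
    have H2: "(\<Sum>C\<in>CL. \<tau> C * A i (rep C)) = 0" if i: "i < m" for i
    proof -
      have "(\<Sum>C\<in>CL. \<tau> C * A i (rep C)) = (\<Sum>C\<in>CL. \<Sum>j\<in>C. A i j)"
      proof (rule sum.cong[OF refl])
        fix C assume C: "C \<in> CL"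
        have "(\<Sum>j\<in>C. A i j) = (\<Sum>j\<in>C. g j * A i (rep C))" by (rule sum.cong) (simp_all add: gp(1)[OF C] i)
        then show "\<tau> C * A i (rep C) = (\<Sum>j\<in>C. A i j)" by (simp add: \<tau>_def sum_distrib_right)
      qed
      also have "\<dots> = (\<Sum>j<k. A i j)" using sum_classes[of "A i" k A m] by (simp add: CL_def)
      also have "\<dots> = 0" using rc i unfolding type_RC_def by blast
      finally show ?thesis .
    qed
    have t0: "\<tau> C0 \<noteq> 0"
    proof
      assume t: "\<tau> C0 = 0"
      obtain i0 where i0: "i0 < m" "(\<Sum>j\<in>C0. A i0 j) \<noteq> 0" using ncz unfolding class_sums_zero_def by blast
      have "(\<Sum>j\<in>C0. A i0 j) = (\<Sum>j\<in>C0. g j * A i0 (rep C0))"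
        by (rule sum.cong) (simp_all add: gp(1)[of C0] C0 CL_def i0(1))
      also have "\<dots> = \<tau> C0 * A i0 (rep C0)" by (simp add: \<tau>_def sum_distrib_right)
      finally show False using t i0(2) by simp
    qed
    define K where "K = kerset 1 (\<lambda>_. \<tau>) CL"
    have fCL: "finite CL" by (simp add: CL_def CL_finite)
    have ind: "indep 1 (\<lambda>_. \<tau>) CL"
      unfolding indep_def
    proof (rule allI, rule impI)
      fix c :: "nat \<Rightarrow> 'a"
      assume "\<forall>r\<in>CL. (\<Sum>i<1. c i * \<tau> r) = 0"
      then have "(\<Sum>i<1. c i * \<tau> C0) = 0" using C0 unfolding CL_def by blast
      then have "c 0 * \<tau> C0 = 0" by simp
      then show "\<forall>i<1. c i = 0" using t0 by simp
    qed
    have "card K * CARD('a) ^ 1 \<le> CARD('a) ^ card CL" using key_count[OF fCL ind] by (simp add: K_def)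
    then have "card K * CARD('a) \<le> CARD('a) ^ m * CARD('a)" using l by (simp add: CL_def mult.commute)
    then have cK: "card K \<le> CARD('a) ^ m" by simp
    have RK: "RSr A m k \<subseteq> K"
    proof
      fix \<beta> assume \<beta>: "\<beta> \<in> RSr A m k"
      then obtain c where c: "\<forall>C\<in>CL. \<beta> C = (\<Sum>i<m. c i * A i (rep C))" using RSr_mem CL_def by blast
      have "(\<Sum>C\<in>CL. \<tau> C * \<beta> C) = (\<Sum>C\<in>CL. \<Sum>i<m. c i * (\<tau> C * A i (rep C)))"
        by (rule sum.cong) (simp_all add: c sum_distrib_left mult.left_commute)
      also have "\<dots> = (\<Sum>i<m. c i * (\<Sum>C\<in>CL. \<tau> C * A i (rep C)))"
        by (simp add: sum.swap[of _ CL] sum_distrib_left)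
      also have "\<dots> = 0" by (simp add: H2)
      finally have "(\<Sum>C\<in>CL. \<tau> C * \<beta> C) = 0" .
      moreover have "\<beta> \<in> CL \<rightarrow>\<^sub>E UNIV" using \<beta> RSr_sub CL_def by blast
      ultimately show "\<beta> \<in> K" by (simp add: K_def kerset_def)
    qed
    have fK: "finite K" unfolding K_def kerset_def
      by (rule rev_finite_subset[of "CL \<rightarrow>\<^sub>E (UNIV :: 'a set)"]) (simp_all add: finite_PiE fCL)
    have "card (RSr A m k) = CARD('a) ^ m" using RSr_card[OF nd] .
    then have "RSr A m k = K" using card_subset_eq[OF fK RK] cK card_mono[OF fK RK] by simp
    moreover have "restrict (\<lambda>C. b (rep C)) CL \<in> K"
      using H1 by (simp add: K_def kerset_def)
    ultimately have "restrict (\<lambda>C. b (rep C)) CL \<in> RSr A m k" by simp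
    then obtain c where c: "\<forall>C\<in>CL. restrict (\<lambda>C. b (rep C)) CL C = (\<Sum>i<m. c i * A i (rep C))"
      using RSr_mem CL_def by blast
    have c': "\<forall>C\<in>col_classes A m k. b (rep C) = (\<Sum>i<m. c i * A i (rep C))" using c by (simp add: CL_def)
    have pr: "\<forall>C\<in>col_classes A m k. \<forall>j\<in>C. \<exists>g. (\<forall>i<m. A i j = g * A i (rep C)) \<and> b j = g * b (rep C)"
      using prop_b[OF pres] by blast
    show "b \<in> row_space A m k" using inRS[OF bk pr c'] .
  qed
  show ?thesis using xS sol ann by blast
qed

lemma pow_ineq:
  fixes q n l s :: nat
  assumes q: "q \<ge> 1"
    and h: "real s \<ge> real q powr (1 + (real l - 1) / real l * real n)"
  shows "q ^ (l + l * n) \<le> s ^ l * q ^ n"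
proof (cases "l = 0")
  case True
  then show ?thesis using q by simp
next
  case False
  define e where "e = 1 + (real l - 1) / real l * real n"
  have le: "real l * e = real (l + (l - 1) * n)" using False
    by (simp add: e_def field_simps of_nat_diff)
  have qp: "real q > 0" using q by simp
  have "(real q powr e) ^ l \<le> real s ^ l"
    using h by (intro power_mono) (simp_all add: e_def)
  moreover have "(real q powr e) ^ l = real q powr (real l * e)"
    using qp by (simp add: powr_power)
  moreover have "real q powr (real (l + (l - 1) * n)) = real q ^ (l + (l - 1) * n)"
    using qp by (rule powr_realpow)
  ultimately have "real (q ^ (l + (l - 1) * n)) \<le> real (s ^ l)" using le by simp
  then have a: "q ^ (l + (l - 1) * n) \<le> s ^ l" by (simp only: of_nat_le_iff)
  have "l + l * n = (l + (l - 1) * n) + n" using False by (cases l) simp_all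
  then have "q ^ (l + l * n) = q ^ (l + (l - 1) * n) * q ^ n" by (simp add: power_add)
  then show ?thesis using a by simp
qed



lemma caseA:
  fixes A :: "nat \<Rightarrow> nat \<Rightarrow> 'a::{field,finite}"
    and S :: "('n::finite \<Rightarrow> 'a) set"
  assumes nd: "non_degenerate A m k"
    and cz: "\<forall>C\<in>col_classes A m k. class_sums_zero A m C"
    and big: "CARD('a) ^ (card (col_classes A m k) + card (col_classes A m k) * CARD('n))
              \<le> card S ^ card (col_classes A m k) * CARD('a) ^ CARD('n)"
  shows "\<exists>x :: nat \<Rightarrow> 'n \<Rightarrow> 'a. (\<forall>j<k. x j \<in> S) \<and> is_solution A m k x
           \<and> (\<forall>b\<in>Ann_bal k x. preserves_classes A m k b \<longrightarrow> b \<in> row_space A m k)"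
proof -
  define CL where "CL = col_classes A m k"
  define l where "l = card CL"
  define q where "q = CARD('a)"
  define n where "n = CARD('n)"
  have fCL: "finite CL" by (simp add: CL_def CL_finite)
  have q1: "q \<ge> 1" unfolding q_def by (simp add: Suc_le_eq)
  have fS: "finite S" by (rule finite_subset[of _ UNIV]) simp_all
  define T where "T = CL \<rightarrow>\<^sub>E S"
  have fT: "finite T" unfolding T_def using fCL fS by (simp add: finite_PiE)
  have cT: "card T = card S ^ l" unfolding T_def l_def using fCL by (simp add: card_PiE)
  define F where "F s = restrict (\<lambda>i t. \<Sum>C\<in>CL. A i (rep C) * s C t) {..<m}" for s :: "nat set \<Rightarrow> 'n \<Rightarrow> 'a"
  define Y where "Y = {..<m} \<rightarrow>\<^sub>E (UNIV :: ('n \<Rightarrow> 'a) set)"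
  have fY: "finite Y" unfolding Y_def by (simp add: finite_PiE)
  have cY: "card Y = q ^ (n * m)"
  proof -
    have "card (UNIV :: ('n \<Rightarrow> 'a) set) = q ^ n" unfolding q_def n_def by (simp add: card_fun)
    then show ?thesis unfolding Y_def by (simp add: card_PiE power_mult)
  qed
  have FY: "F ` T \<subseteq> Y" unfolding Y_def F_def by (rule image_subsetI) simp
  define G where "G = {p \<in> T \<times> T. F (fst p) = F (snd p)}"
  have fG: "finite G" unfolding G_def using fT by simp
  have CS: "card T ^ 2 \<le> card Y * card G" unfolding G_def using cs_nat[OF fT fY FY] .
  have Fdiff: "(\<Sum>C\<in>CL. A i (rep C) * (fst p C t - snd p C t)) = 0" if p: "p \<in> G" and i: "i < m" for p i t
  proof -
    have "F (fst p) i = F (snd p) i" using p by (simp add: G_def)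
    then have "(\<lambda>t. \<Sum>C\<in>CL. A i (rep C) * fst p C t) = (\<lambda>t. \<Sum>C\<in>CL. A i (rep C) * snd p C t)"
      using i by (simp add: F_def)
    then have "(\<Sum>C\<in>CL. A i (rep C) * fst p C t) = (\<Sum>C\<in>CL. A i (rep C) * snd p C t)"
      by (rule fun_cong)
    then show ?thesis by (simp add: right_diff_distrib sum_subtractf)
  qed
  define X where "X p = xx A m k (fst p) (snd p)" for p :: "(nat set \<Rightarrow> 'n \<Rightarrow> 'a) \<times> (nat set \<Rightarrow> 'n \<Rightarrow> 'a)"
  have Xsum: "(\<Sum>j<k. w j * X p j t) = (\<Sum>C\<in>CL. w (rep C) * (fst p C t - snd p C t))"
    if wz: "\<forall>C\<in>CL. (\<Sum>j\<in>C. w j) = 0" for w p t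
  proof -
    have "(\<Sum>j<k. w j * X p j t) = (\<Sum>C\<in>CL. \<Sum>j\<in>C. w j * X p j t)"
      using sum_classes[of "\<lambda>j. w j * X p j t" k A m] by (simp add: CL_def)
    also have "\<dots> = (\<Sum>C\<in>CL. w (rep C) * (fst p C t - snd p C t))"
    proof (rule sum.cong[OF refl])
      fix C assume C: "C \<in> CL"
      show "(\<Sum>j\<in>C. w j * X p j t) = w (rep C) * (fst p C t - snd p C t)"
        using xsum[of C A m k w "fst p" "snd p" t] C wz by (simp add: X_def CL_def)
    qed
    finally show ?thesis .
  qed
  have solG: "is_solution A m k (X p)" if p: "p \<in> G" for p
    unfolding is_solution_def
  proof (intro allI impI)
    fix i assume i: "i < m"
    have wz: "\<forall>C\<in>CL. (\<Sum>j\<in>C. A i j) = 0" using cz i unfolding CL_def class_sums_zero_def by blast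
    show "(\<lambda>t. \<Sum>j<k. A i j * X p j t) = (\<lambda>t. 0)"
    proof
      fix t show "(\<Sum>j<k. A i j * X p j t) = 0"
        using Xsum[OF wz, of p t] Fdiff[OF p i, of t] by simp
    qed
  qed
  have inS: "X p j \<in> S" if p: "p \<in> G" and j: "j < k" for p j
  proof -
    have C: "col_class A m k j \<in> CL" using cc_in[OF j] by (simp add: CL_def)
    have "fst p \<in> T" "snd p \<in> T" using p by (auto simp: G_def)
    then have "fst p (col_class A m k j) \<in> S" "snd p (col_class A m k j) \<in> S"
      using C unfolding T_def by (auto simp: PiE_iff)
    then show ?thesis by (simp add: X_def xx_def)
  qed
  define RS where "RS = RSr A m k"
  define B where "B = (CL \<rightarrow>\<^sub>E (UNIV :: 'a set)) - RS"
  define P where "P \<beta> = {p \<in> G. \<forall>t. (\<Sum>C\<in>CL. \<beta> C * (fst p C t - snd p C t)) = 0}" for \<beta>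
  have bad: "p \<in> (\<Union>\<beta>\<in>B. P \<beta>)"
    if p: "p \<in> G" and b: "b \<in> Ann_bal k (X p)" and pres: "preserves_classes A m k b"
      and nb: "b \<notin> row_space A m k" for p b
  proof -
    define \<beta> where "\<beta> = restrict (\<lambda>C. b (rep C)) CL"
    have bk: "\<forall>j\<ge>k. b j = 0" and bx: "(\<lambda>t. \<Sum>j<k. b j * X p j t) = (\<lambda>t. 0)"
      using b by (auto simp: Ann_bal_def)
    have wz: "\<forall>C\<in>CL. (\<Sum>j\<in>C. b j) = 0"
      using sum_b_zero[OF nd pres] cz unfolding CL_def by blast
    have "\<forall>t. (\<Sum>C\<in>CL. \<beta> C * (fst p C t - snd p C t)) = 0"
    proof
      fix t
      have "(\<Sum>C\<in>CL. \<beta> C * (fst p C t - snd p C t)) = (\<Sum>C\<in>CL. b (rep C) * (fst p C t - snd p C t))"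
        by (rule sum.cong) (simp_all add: \<beta>_def)
      also have "\<dots> = (\<Sum>j<k. b j * X p j t)" using Xsum[OF wz, of p t] by simp
      also have "\<dots> = 0" using fun_cong[OF bx, of t] by simp
      finally show "(\<Sum>C\<in>CL. \<beta> C * (fst p C t - snd p C t)) = 0" .
    qed
    then have pP: "p \<in> P \<beta>" using p by (simp add: P_def)
    have "\<beta> \<notin> RS"
    proof
      assume "\<beta> \<in> RS"
      then obtain c where c: "\<forall>C\<in>CL. \<beta> C = (\<Sum>i<m. c i * A i (rep C))"
        using RSr_mem unfolding RS_def CL_def by blast
      have c': "\<forall>C\<in>col_classes A m k. b (rep C) = (\<Sum>i<m. c i * A i (rep C))"
        using c by (simp add: \<beta>_def CL_def)
      have pr: "\<forall>C\<in>col_classes A m k. \<forall>j\<in>C. \<exists>g. (\<forall>i<m. A i j = g * A i (rep C)) \<and> b j = g * b (rep C)"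
        using prop_b[OF pres] by blast
      show False using inRS[OF bk pr c'] nb by simp
    qed
    moreover have "\<beta> \<in> CL \<rightarrow>\<^sub>E UNIV" by (simp add: \<beta>_def)
    ultimately have "\<beta> \<in> B" by (simp add: B_def)
    then show ?thesis using pP by blast
  qed
  have cB: "card B \<le> q ^ l - 1"
  proof -
    have z: "restrict (\<lambda>_. 0) CL \<in> RS"
      unfolding RS_def by (rule RSr_intro[where c="\<lambda>_. 0"]) (simp_all add: CL_def)
    have "B \<subseteq> (CL \<rightarrow>\<^sub>E (UNIV :: 'a set)) - {restrict (\<lambda>_. 0) CL}" using z by (auto simp: B_def)
    moreover have "finite (CL \<rightarrow>\<^sub>E (UNIV :: 'a set))" using fCL by (simp add: finite_PiE)
    ultimately have "card B \<le> card ((CL \<rightarrow>\<^sub>E (UNIV :: 'a set)) - {restrict (\<lambda>_. 0) CL})"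
      by (intro card_mono) auto
    also have "\<dots> = card (CL \<rightarrow>\<^sub>E (UNIV :: 'a set)) - 1"
      by (rule card_Diff_singleton) simp
    also have "card (CL \<rightarrow>\<^sub>E (UNIV :: 'a set)) = q ^ l"
      using fCL by (simp add: card_PiE q_def l_def)
    finally show ?thesis .
  qed
  have cP: "card (P \<beta>) * q ^ (Suc m * n) \<le> card T * q ^ (l * n)" if \<beta>B: "\<beta> \<in> B" for \<beta>
  proof -
    define \<rho> where "\<rho> i C = (if i < m then A i (rep C) else \<beta> C)" for i C
    define U where "U = kerset (Suc m) \<rho> CL"
    have ind: "indep (Suc m) \<rho> CL"
      unfolding indep_def
    proof (rule allI, rule impI)
      fix c :: "nat \<Rightarrow> 'a"
      assume hc: "\<forall>r\<in>CL. (\<Sum>i<Suc m. c i * \<rho> i r) = 0"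
      have e: "(\<Sum>i<Suc m. c i * \<rho> i r) = (\<Sum>i<m. c i * A i (rep r)) + c m * \<beta> r" for r
      proof -
        have "(\<Sum>i<m. c i * \<rho> i r) = (\<Sum>i<m. c i * A i (rep r))" by (rule sum.cong) (simp_all add: \<rho>_def)
        then show ?thesis by (simp add: \<rho>_def)
      qed
      have cm: "c m = 0"
      proof (rule ccontr)
        assume cm: "c m \<noteq> 0"
        have allC: "\<forall>C\<in>CL. \<beta> C = (\<Sum>i<m. (- c i / c m) * A i (rep C))"
        proof
          fix C assume C: "C \<in> CL"
          have "(\<Sum>i<m. c i * A i (rep C)) + c m * \<beta> C = 0" using hc C e by simp
          then have "\<beta> C = - (\<Sum>i<m. c i * A i (rep C)) / c m" using cm by (simp add: field_simps add_eq_0_iff)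
          then show "\<beta> C = (\<Sum>i<m. (- c i / c m) * A i (rep C))"
            by (simp add: sum_divide_distrib sum_negf)
        qed
        have memb: "\<beta> \<in> col_classes A m k \<rightarrow>\<^sub>E UNIV" using \<beta>B by (simp add: B_def CL_def)
        have "\<beta> \<in> RS" unfolding RS_def
          by (rule RSr_intro[where c="\<lambda>i. - c i / c m", OF memb]) (use allC in \<open>simp add: CL_def\<close>)
        then show False using \<beta>B by (simp add: B_def)
      qed
      have "\<forall>C\<in>col_classes A m k. (\<Sum>i<m. c i * A i (rep C)) = 0" using hc e cm by (simp add: CL_def)
      then have "\<forall>i<m. c i = 0" by (rule RSind[OF nd])
      then show "\<forall>i<Suc m. c i = 0" using cm by (simp add: less_Suc_eq)
    qed
    have kc: "card U * q ^ Suc m \<le> q ^ l" unfolding U_def q_def l_def using key_count[OF fCL ind] .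
    have fU: "finite U" unfolding U_def kerset_def
      by (rule rev_finite_subset[of "CL \<rightarrow>\<^sub>E (UNIV :: 'a set)"]) (simp_all add: finite_PiE fCL)
    define \<phi> where "\<phi> p = (snd p, \<lambda>t. restrict (\<lambda>C. fst p C t - snd p C t) CL)" for p :: "(nat set \<Rightarrow> 'n \<Rightarrow> 'a) \<times> (nat set \<Rightarrow> 'n \<Rightarrow> 'a)"
    have inj: "inj_on \<phi> (P \<beta>)"
    proof (rule inj_onI)
      fix p p' assume p: "p \<in> P \<beta>" and p': "p' \<in> P \<beta>" and eq: "\<phi> p = \<phi> p'"
      have s: "snd p = snd p'" using eq by (simp add: \<phi>_def)
      have d: "\<And>t. restrict (\<lambda>C. fst p C t - snd p C t) CL = restrict (\<lambda>C. fst p' C t - snd p' C t) CL"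
      proof -
        have "snd (\<phi> p) = snd (\<phi> p')" using eq by simp
        then have "(\<lambda>t. restrict (\<lambda>C. fst p C t - snd p C t) CL) = (\<lambda>t. restrict (\<lambda>C. fst p' C t - snd p' C t) CL)"
          by (simp only: \<phi>_def snd_conv)
        then show "\<And>t. restrict (\<lambda>C. fst p C t - snd p C t) CL = restrict (\<lambda>C. fst p' C t - snd p' C t) CL"
          by (rule fun_cong)
      qed
      have "fst p \<in> T" "fst p' \<in> T" using p p' by (auto simp: P_def G_def)
      then have "fst p \<in> CL \<rightarrow>\<^sub>E S" "fst p' \<in> CL \<rightarrow>\<^sub>E S" by (simp_all add: T_def)
      moreover have "\<forall>C\<in>CL. fst p C = fst p' C"
      proof
        fix C assume C: "C \<in> CL"
        show "fst p C = fst p' C"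
        proof
          fix t
          have "fst p C t - snd p C t = fst p' C t - snd p' C t" using fun_cong[OF d[of t], of C] C by simp
          then show "fst p C t = fst p' C t" using s by simp
        qed
      qed
      ultimately have "fst p = fst p'" using PiE_ext by metis
      then show "p = p'" using s by (simp add: prod_eq_iff)
    qed
    have sub: "\<phi> ` (P \<beta>) \<subseteq> T \<times> ((UNIV :: 'n set) \<rightarrow>\<^sub>E U)"
    proof (rule image_subsetI)
      fix p assume p: "p \<in> P \<beta>"
      then have pG: "p \<in> G" and pb: "\<forall>t. (\<Sum>C\<in>CL. \<beta> C * (fst p C t - snd p C t)) = 0"
        by (simp_all add: P_def)
      have sT: "snd p \<in> T" using pG by (auto simp: G_def)
      have "restrict (\<lambda>C. fst p C t - snd p C t) CL \<in> U" for t
      proof -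
        have "\<forall>i<Suc m. (\<Sum>C\<in>CL. \<rho> i C * restrict (\<lambda>C. fst p C t - snd p C t) CL C) = 0"
        proof (intro allI impI)
          fix i assume i: "i < Suc m"
          have "(\<Sum>C\<in>CL. \<rho> i C * restrict (\<lambda>C. fst p C t - snd p C t) CL C) = (\<Sum>C\<in>CL. \<rho> i C * (fst p C t - snd p C t))"
            by (rule sum.cong) simp_all
          also have "\<dots> = 0"
          proof (cases "i < m")
            case True
            have "(\<Sum>C\<in>CL. \<rho> i C * (fst p C t - snd p C t)) = (\<Sum>C\<in>CL. A i (rep C) * (fst p C t - snd p C t))"
              by (rule sum.cong) (simp_all add: \<rho>_def True)
            then show ?thesis using Fdiff[OF pG True, of t] by simp
          next
            case False
            then have "i = m" using i by simp
            then have "(\<Sum>C\<in>CL. \<rho> i C * (fst p C t - snd p C t)) = (\<Sum>C\<in>CL. \<beta> C * (fst p C t - snd p C t))"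
              by (simp add: \<rho>_def)
            then show ?thesis using pb by simp
          qed
          finally show "(\<Sum>C\<in>CL. \<rho> i C * restrict (\<lambda>C. fst p C t - snd p C t) CL C) = 0" .
        qed
        moreover have "restrict (\<lambda>C. fst p C t - snd p C t) CL \<in> CL \<rightarrow>\<^sub>E UNIV" by simp
        ultimately show ?thesis unfolding U_def kerset_def by blast
      qed
      then have "(\<lambda>t. restrict (\<lambda>C. fst p C t - snd p C t) CL) \<in> (UNIV :: 'n set) \<rightarrow>\<^sub>E U" by (simp add: PiE_iff)
      then show "\<phi> p \<in> T \<times> ((UNIV :: 'n set) \<rightarrow>\<^sub>E U)" using sT by (simp add: \<phi>_def)
    qed
    have fin2: "finite (T \<times> ((UNIV :: 'n set) \<rightarrow>\<^sub>E U))" using fT fU by (intro finite_cartesian_product finite_PiE) auto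
    have "card (P \<beta>) \<le> card (T \<times> ((UNIV :: 'n set) \<rightarrow>\<^sub>E U))" by (rule card_inj_on_le[OF inj sub fin2])
    also have "\<dots> = card T * card U ^ n" by (simp add: card_cartesian_product card_PiE n_def)
    finally have c1: "card (P \<beta>) \<le> card T * card U ^ n" .
    have "(card U * q ^ Suc m) ^ n \<le> (q ^ l) ^ n" using kc by (rule power_mono) simp
    moreover have e1: "q ^ (Suc m * n) = (q ^ Suc m) ^ n" by (rule power_mult)
    moreover have e2: "q ^ (l * n) = (q ^ l) ^ n" by (rule power_mult)
    ultimately have c2: "card U ^ n * q ^ (Suc m * n) \<le> q ^ (l * n)" by (simp only: power_mult_distrib)
    have "card (P \<beta>) * q ^ (Suc m * n) \<le> card T * card U ^ n * q ^ (Suc m * n)" using c1 by simp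
    also have "\<dots> = card T * (card U ^ n * q ^ (Suc m * n))" by simp
    also have "\<dots> \<le> card T * q ^ (l * n)" using c2 by simp
    finally show ?thesis .
  qed
  have ex: "\<exists>p\<in>G. p \<notin> (\<Union>\<beta>\<in>B. P \<beta>)"
  proof (rule ccontr)
    assume "\<not> ?thesis"
    then have GU: "G \<subseteq> (\<Union>\<beta>\<in>B. P \<beta>)" by blast
    have fB: "finite B" unfolding B_def using fCL by (simp add: finite_PiE)
    have fU: "finite (\<Union>\<beta>\<in>B. P \<beta>)" using fB fG by (simp add: P_def)
    have "card G \<le> card (\<Union>\<beta>\<in>B. P \<beta>)" using card_mono[OF fU GU] .
    also have "\<dots> \<le> (\<Sum>\<beta>\<in>B. card (P \<beta>))" using card_UN_le[OF fB] .
    finally have cGs: "card G * q ^ (Suc m * n) \<le> (\<Sum>\<beta>\<in>B. card (P \<beta>)) * q ^ (Suc m * n)" by simp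
    also have "\<dots> = (\<Sum>\<beta>\<in>B. card (P \<beta>) * q ^ (Suc m * n))" by (simp add: sum_distrib_right)
    also have "\<dots> \<le> (\<Sum>\<beta>\<in>B. card T * q ^ (l * n))" by (rule sum_mono) (rule cP)
    also have "\<dots> = card B * (card T * q ^ (l * n))" by simp
    also have "\<dots> \<le> (q ^ l - 1) * (card T * q ^ (l * n))" using cB by (rule mult_right_mono) simp
    finally have A1: "card G * q ^ (Suc m * n) \<le> (q ^ l - 1) * (card T * q ^ (l * n))" .
    have "card T ^ 2 * q ^ (Suc m * n) \<le> card Y * card G * q ^ (Suc m * n)" using CS by simp
    also have "\<dots> = q ^ (n * m) * (card G * q ^ (Suc m * n))" using cY by simp
    also have "\<dots> \<le> q ^ (n * m) * ((q ^ l - 1) * (card T * q ^ (l * n)))" using A1 by simp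
    finally have A2: "card T ^ 2 * q ^ (Suc m * n) \<le> q ^ (n * m) * ((q ^ l - 1) * (card T * q ^ (l * n)))" .
    have "q ^ (Suc m * n) = q ^ n * q ^ (n * m)" by (simp add: power_add mult.commute)
    then have "(card T * q ^ n) * (card T * q ^ (n * m)) \<le> ((q ^ l - 1) * q ^ (l * n)) * (card T * q ^ (n * m))"
      using A2 by (simp add: power2_eq_square ac_simps)
    moreover have "card T * q ^ (n * m) > 0"
    proof -
      have "q ^ (l + l * n) \<ge> 1" using q1 by simp
      then have "card S ^ l * q ^ n \<ge> 1" using big unfolding q_def n_def l_def CL_def by linarith
      then have "card S ^ l > 0" by (metis gr0I mult_zero_left not_one_le_zero)
      then show ?thesis using cT q1 by simp
    qed
    ultimately have A3: "card T * q ^ n \<le> (q ^ l - 1) * q ^ (l * n)" using mult_le_cancel2[of "card T * q ^ n" "card T * q ^ (n * m)" "(q ^ l - 1) * q ^ (l * n)"] by blast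
    have "q ^ l * q ^ (l * n) \<le> card T * q ^ n" using big cT
      unfolding q_def n_def l_def CL_def by (simp add: power_add mult.commute)
    moreover have "(q ^ l - 1) * q ^ (l * n) < q ^ l * q ^ (l * n)" using q1 by simp
    ultimately show False using A3 by linarith
  qed
  then obtain p where pG: "p \<in> G" and pn: "p \<notin> (\<Union>\<beta>\<in>B. P \<beta>)" by blast
  have "(\<forall>j<k. X p j \<in> S) \<and> is_solution A m k (X p)
        \<and> (\<forall>b\<in>Ann_bal k (X p). preserves_classes A m k b \<longrightarrow> b \<in> row_space A m k)"
    using inS[OF pG] solG[OF pG] bad[OF pG] pn by blast
  then show ?thesis by blast
qed


theorem lemma6p5:
  fixes A :: "nat \<Rightarrow> nat \<Rightarrow> 'a::{field,finite}"
    and m k :: nat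
    and S :: "('n::finite \<Rightarrow> 'a) set"
  assumes "type_RC A m k"
    and "non_degenerate A m k"
    and "irreducible_sys A m k"
    and "real (card S) \<ge> real (CARD('a)) powr
           (1 + (real (card (col_classes A m k)) - 1) / real (card (col_classes A m k))
                 * real (CARD('n)))"
    and "card (col_classes A m k) = m + 1 \<or> (\<forall>C\<in>col_classes A m k. class_sums_zero A m C)"
  shows "\<exists>x :: nat \<Rightarrow> 'n \<Rightarrow> 'a. (\<forall>j<k. x j \<in> S) \<and> is_solution A m k x
           \<and> (\<forall>b\<in>Ann_bal k x. preserves_classes A m k b \<longrightarrow> b \<in> row_space A m k)"
proof -
  have q1: "CARD('a) \<ge> 1" by (simp add: Suc_le_eq)
  have big: "CARD('a) ^ (card (col_classes A m k) + card (col_classes A m k) * CARD('n))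
              \<le> card S ^ card (col_classes A m k) * CARD('a) ^ CARD('n)"
    using pow_ineq[OF q1 assms(4)] .
  show ?thesis
  proof (cases "\<forall>C\<in>col_classes A m k. class_sums_zero A m C")
    case True
    show ?thesis using caseA[OF assms(2) True big] .
  next
    case False
    then obtain C0 where C0: "C0 \<in> col_classes A m k" "\<not> class_sums_zero A m C0" by blast
    have l: "card (col_classes A m k) = m + 1" using assms(5) False by blast
    have Sne: "S \<noteq> {}"
    proof
      assume "S = {}"
      then have z: "card S ^ card (col_classes A m k) = 0" using l by simp
      have "CARD('a) ^ (card (col_classes A m k) + card (col_classes A m k) * CARD('n)) \<le> 0"
        using big by (simp only: z mult_zero_left)
      moreover have "CARD('a) ^ (card (col_classes A m k) + card (col_classes A m k) * CARD('n)) \<ge> 1"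
        using q1 by simp
      ultimately show False by simp
    qed
    show ?thesis using caseB[OF assms(1) assms(2) l C0 Sne] .
  qed
qed

end
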